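(* For every prime power $q$ and every $0<\varepsilon<1/2$ there exists a constant $c=c(q,\varepsilon)$ such that for every composite integer $n>c$, $$C_q(n)\le \frac{q^n}{n^{1/2-\varepsilon}}.$$
   Context: $\mathbb{F}_q$ is the finite field with $q$ elements. A finite ring $S$ is a Carmichael ring if $S$ is not a field and $a^{|S|}=a$ for every $a\in S$. A polynomial $f\in\mathbb{F}_q[t]$ is a Carmichael polynomial if $\mathbb{F}_q[t]/(f)$ is a Carmichael ring. $C_q(n)$ denotes the number of monic Carmichael polynomials in $\mathbb{F}_q[t]$ of degree $n$. *)

theory Defs
  imports Complex_Main "HOL-Computational_Algebra.Polynomial"
begin

text \<open>The quotient ring S = F[t]/(f) is modelled via congruence modulo f on polynomials.\<close>

definition quot_card :: "'a::field poly \<Rightarrow> nat" where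
  "quot_card f = card ((UNIV :: 'a poly set) // {(a, b). f dvd (a - b)})"

definition quot_is_field :: "'a::field poly \<Rightarrow> bool" where
  "quot_is_field f \<longleftrightarrow> \<not> f dvd 1 \<and> (\<forall>a. \<not> f dvd a \<longrightarrow> (\<exists>b. f dvd (a * b - 1)))"

definition carmichael_poly :: "'a::field poly \<Rightarrow> bool" where
  "carmichael_poly f \<longleftrightarrow> \<not> quot_is_field f \<and> (\<forall>a. f dvd (a ^ quot_card f - a))"

text \<open>C_q(n) for the finite field 'a with q = CARD('a) elements.\<close>
definition carmichael_count :: "'a::{finite,field} itself \<Rightarrow> nat \<Rightarrow> nat" where
  "carmichael_count _ n =
     card {f :: 'a poly. lead_coeff f = 1 \<and> degree f = n \<and> carmichael_poly f}"

end

theory Submission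
  imports Defs "Berlekamp_Zassenhaus.Distinct_Degree_Factorization" "HOL-Real_Asymp.Real_Asymp" "HOL-Analysis.Harmonic_Numbers"
begin

lemma card_deg_less:
  "card {r :: 'a::{finite,field} poly. r = 0 \<or> degree r < n} = CARD('a) ^ n"
proof (induction n)
  case 0
  have "{r :: 'a poly. r = 0 \<or> degree r < 0} = {0}" by auto
  thus ?case by simp
next
  case (Suc n)
  have eq: "{r :: 'a poly. r = 0 \<or> degree r < Suc n} = (\<lambda>(a,p). pCons a p) ` ((UNIV :: 'a set) \<times> {r. r = 0 \<or> degree r < n})"
  proof
    show "{r :: 'a poly. r = 0 \<or> degree r < Suc n} \<subseteq> (\<lambda>(a,p). pCons a p) ` ((UNIV :: 'a set) \<times> {r. r = 0 \<or> degree r < n})"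
    proof
      fix r :: "'a poly" assume r: "r \<in> {r. r = 0 \<or> degree r < Suc n}"
      obtain a p where rp: "r = pCons a p" by (cases r) auto
      have "p = 0 \<or> degree p < n" using r rp by (cases "p = 0") auto
      thus "r \<in> (\<lambda>(a,p). pCons a p) ` ((UNIV :: 'a set) \<times> {r. r = 0 \<or> degree r < n})"
        using rp by auto
    qed
    show "(\<lambda>(a,p). pCons a p) ` ((UNIV :: 'a set) \<times> {r. r = 0 \<or> degree r < n}) \<subseteq> {r :: 'a poly. r = 0 \<or> degree r < Suc n}"
      by (auto split: if_splits)
  qed
  have inj: "inj_on (\<lambda>(a,p). pCons a p) ((UNIV :: 'a set) \<times> {r :: 'a poly. r = 0 \<or> degree r < n})"
    by (auto simp: inj_on_def)
  have "card {r :: 'a poly. r = 0 \<or> degree r < Suc n} = card ((UNIV :: 'a set) \<times> {r :: 'a poly. r = 0 \<or> degree r < n})"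
    unfolding eq using card_image[OF inj] by simp
  also have "\<dots> = CARD('a) * CARD('a)^n" using Suc by (simp add: card_cartesian_product)
  finally show ?case by simp
qed

lemma finite_deg_less: "finite {r :: 'a::{finite,field} poly. r = 0 \<or> degree r < n}"
proof -
  have "card {r :: 'a::{finite,field} poly. r = 0 \<or> degree r < n} > 0" 
    unfolding card_deg_less by simp
  thus ?thesis using card_ge_0_finite by blast
qed

lemma irr_inverse:
  fixes P a :: "'a::{finite,field} poly"
  assumes irr: "irreducible P" and na: "\<not> P dvd a"
  shows "\<exists>b. degree b < degree P \<and> P dvd a * b - 1"
proof -
  have degP: "degree P > 0"
    using irr irreducible_degree_field by blast
  define C where "C = {r :: 'a poly. r = 0 \<or> degree r < degree P}"
  have finC: "finite C" unfolding C_def by (rule finite_deg_less)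
  define g where "g = (\<lambda>y. a * y mod P)"
  have sub: "g ` C \<subseteq> C"
  proof
    fix u assume "u \<in> g ` C"
    then obtain y where u: "u = a * y mod P" unfolding g_def by auto
    have "P \<noteq> 0" using degP by auto
    hence "u = 0 \<or> degree u < degree P" using degree_mod_less'[of P "a*y"] u by auto
    thus "u \<in> C" unfolding C_def by simp
  qed
  have inj: "inj_on g C"
  proof (rule inj_onI)
    fix y z assume y: "y \<in> C" and z: "z \<in> C" and eq: "g y = g z"
    have "P dvd a * y - a * z" using eq unfolding g_def mod_eq_dvd_iff .
    hence "P dvd a * (y - z)" by (simp add: algebra_simps)
    hence "P dvd y - z" using field_poly_irreducible_dvd_mult[OF irr] na by blast
    moreover have "degree (y - z) \<le> max (degree y) (degree z)" by (rule degree_diff_le_max)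
    hence "degree (y - z) < degree P"
      using y z degP unfolding C_def by auto
    ultimately have "y - z = 0"
    proof -
      assume d: "P dvd y - z" and l: "degree (y - z) < degree P"
      show "y - z = 0"
      proof (rule ccontr)
        assume "y - z \<noteq> 0"
        from dvd_imp_degree_le[OF d this] l show False by simp
      qed
    qed
    thus "y = z" by simp
  qed
  have "g ` C = C" using endo_inj_surj[OF finC sub inj] .
  moreover have "1 \<in> C" unfolding C_def using degP by auto
  ultimately have "1 \<in> g ` C" by simp
  then obtain b where b: "b \<in> C" "1 = g b" by (rule imageE)
  have "1 mod P = (1 :: 'a poly)" using degP by (simp add: mod_poly_less)
  hence "a * b mod P = 1 mod P" using b(2) unfolding g_def by simp
  hence "P dvd a * b - 1" unfolding mod_eq_dvd_iff .
  moreover have "degree b < degree P" using b(1) degP unfolding C_def by auto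
  ultimately show ?thesis by blast
qed


lemma quot_card_eq:
  fixes f :: "'a::{finite,field} poly"
  assumes f0: "f \<noteq> 0"
  shows "quot_card f = CARD('a) ^ degree f"
proof -
  define E where "E = {(a, b). f dvd (a - b :: 'a poly)}"
  define C where "C = {r :: 'a poly. r = 0 \<or> degree r < degree f}"
  have img: "E `` {x} = {y. f dvd x - y}" for x unfolding E_def by auto
  have modC: "x mod f \<in> C" for x
    using degree_mod_less'[of f x] f0 unfolding C_def by (cases "x mod f = 0") auto
  have quot: "UNIV // E = (\<lambda>r. E `` {r}) ` C"
  proof
    show "UNIV // E \<subseteq> (\<lambda>r. E `` {r}) ` C"
    proof
      fix X assume "X \<in> UNIV // E"
      then obtain x where X: "X = E `` {x}" unfolding quotient_def by auto
      have "E `` {x} = E `` {x mod f}"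
      proof -
        have "f dvd x - x mod f" by (simp add: mod_eq_dvd_iff[symmetric])
        have "f dvd x - y \<longleftrightarrow> f dvd x mod f - y" for y
        proof
          assume "f dvd x - y"
          from dvd_diff[OF this \<open>f dvd x - x mod f\<close>] show "f dvd x mod f - y" by simp
        next
          assume "f dvd x mod f - y"
          from dvd_add[OF this \<open>f dvd x - x mod f\<close>] show "f dvd x - y" by simp
        qed
        thus ?thesis unfolding img by auto
      qed
      thus "X \<in> (\<lambda>r. E `` {r}) ` C" using X modC by blast
    qed
    show "(\<lambda>r. E `` {r}) ` C \<subseteq> UNIV // E" unfolding quotient_def by auto
  qed
  have inj: "inj_on (\<lambda>r. E `` {r}) C"
  proof (rule inj_onI)
    fix r s assume r: "r \<in> C" and s: "s \<in> C" and eq: "E `` {r} = E `` {s}"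
    have "s \<in> E `` {s}" unfolding img by simp
    hence "s \<in> E `` {r}" using eq by simp
    hence d: "f dvd r - s" unfolding img by simp
    have "degree (r - s) \<le> max (degree r) (degree s)" by (rule degree_diff_le_max)
    show "r = s"
    proof (rule ccontr)
      assume "r \<noteq> s"
      hence nz: "r - s \<noteq> 0" by simp
      hence "r \<noteq> 0 \<or> s \<noteq> 0" by auto
      hence "degree (r - s) < degree f" using r s \<open>degree (r - s) \<le> _\<close> unfolding C_def by auto
      with dvd_imp_degree_le[OF d nz] show False by simp
    qed
  qed
  have "quot_card f = card ((\<lambda>r. E `` {r}) ` C)" unfolding quot_card_def E_def[symmetric] quot ..
  also have "\<dots> = card C" by (rule card_image[OF inj])
  also have "\<dots> = CARD('a) ^ degree f" unfolding C_def by (rule card_deg_less)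
  finally show ?thesis .
qed


lemma card_ge2: "CARD('a::{finite,field}) \<ge> 2"
proof -
  have "card {0::'a, 1} \<le> CARD('a)" by (rule card_mono) auto
  thus ?thesis by simp
qed

locale irr_poly =
  fixes P :: "'a::{finite,field} poly"
  assumes irr: "irreducible P"
begin

definition R :: "'a poly ring" where
 "R = \<lparr>carrier = {x. degree x < degree P}, monoid.mult = (\<lambda>x y. x*y mod P), one = 1, zero = 0, add = (\<lambda>x y. (x + y) mod P)\<rparr>"

lemma degP: "degree P > 0"
  using irr irreducible_degree_field by blast

lemma P0: "P \<noteq> 0" using degP by auto

lemma P_dvd_ab:
  "a = 0 \<or> b = 0" if "P dvd a * b" 
    and a: "degree a < degree P" 
    and b: "degree b < degree P" 
proof (rule ccontr)
  assume "\<not> (a = 0 \<or> b = 0)"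
  then have "a \<noteq> 0" and "b \<noteq> 0"
    by simp_all
  with a b have "\<not> P dvd a" and "\<not> P dvd b"
    by (auto simp add: mod_poly_less dvd_eq_mod_eq_0)
  moreover from \<open>P dvd a * b\<close> irr have "P dvd a \<or> P dvd b"
    by simp
  ultimately show False
    by simp
qed

lemma ab_mod_P0:
  "a = 0 \<or> b = 0" if "a * b mod P = 0" 
    and a: "degree a < degree P" 
    and b: "degree b < degree P" 
  using that P_dvd_ab by auto

lemma times_mod_P_1_imp_0:
  assumes x: "degree x < degree P" 
    and x2: "\<forall>xa. x * xa mod P = 1 \<longrightarrow> \<not> degree xa < degree P"    
  shows "x = 0" 
proof (rule ccontr)
  assume x3: "x \<noteq> 0"
  have "\<not> P dvd x" using x x3 by (auto simp add: mod_poly_less dvd_eq_mod_eq_0)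
  then obtain b where b: "degree b < degree P" "P dvd x * b - 1" using irr_inverse[OF irr] by blast
  have "1 mod P = (1 :: 'a poly)" using degP by (simp add: mod_poly_less)
  hence "x * b mod P = 1" using b(2) by (metis mod_eq_dvd_iff)
  with x2 b(1) show False by auto
qed

lemma field_R: "field R"
proof -
  have *: "\<exists>y. degree y < degree P \<and> P dvd x + y" if "degree x < degree P"
    for x :: "'a poly"  
  proof -
    from that have "degree (- x) < degree P"
      by simp
    moreover have "P dvd (x + - x)"
      by simp
    ultimately show ?thesis
      by blast
  qed
  have **: "degree (x * y mod P) < degree P"
    if "degree x < degree P" and "degree y < degree P"
    for x y :: "'a poly"
    using that by (cases "x = 0 \<or> y = 0")
      (auto intro: degree_mod_less' dest: P_dvd_ab)
  note degP[simp]
  show "field R"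
    by standard (auto simp add: R_def algebra_simps degree_add_less mod_poly_less mod_add_eq mult_poly_add_left mod_mult_left_eq mod_mult_right_eq mod_eq_0_iff_dvd ab_mod_P0 * ** Units_def dest: times_mod_P_1_imp_0)
qed


lemma carrier_R: "carrier R = {x. degree x < degree P}" unfolding R_def by simp

lemma carrier_R': "carrier R = {r. r = 0 \<or> degree r < degree P}"
  unfolding carrier_R using degP by auto

lemma finite_R: "finite (carrier R)" unfolding carrier_R' by (rule finite_deg_less)

lemma card_R: "card (carrier R) = CARD('a) ^ degree P" unfolding carrier_R' by (rule card_deg_less)

lemma pow_R: "x \<in> carrier R \<Longrightarrow> x [^]\<^bsub>R\<^esub> (n::nat) = x ^ n mod P"
proof (induct n)
  case 0
  thus ?case using degP by (simp add: R_def mod_poly_less)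
next
  case (Suc n)
  have "x [^]\<^bsub>R\<^esub> Suc n = (x [^]\<^bsub>R\<^esub> n) \<otimes>\<^bsub>R\<^esub> x" by simp
  also have "\<dots> = (x ^ n mod P) * x mod P" using Suc by (simp add: R_def)
  also have "\<dots> = x * (x ^ n mod P) mod P" by (simp add: mult.commute)
  also have "\<dots> = x * x ^ n mod P" by (rule mod_mult_right_eq)
  also have "\<dots> = x ^ Suc n mod P" by simp
  finally show ?case .
qed

lemma order_mult: "Coset.order (mult_of R) = CARD('a) ^ degree P - 1"
proof -
  have "carrier (mult_of R) = carrier R - {0}" by (simp add: R_def)
  moreover have "0 \<in> carrier R" by (simp add: carrier_R degP)
  ultimately show ?thesis unfolding Coset.order_def using card_R finite_R
    by (simp add: card_Diff_singleton)
qed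

lemma fermat_R:
  assumes x: "degree x < degree P"
  shows "x ^ (CARD('a) ^ degree P) mod P = x"
proof (cases "x = 0")
  case True
  have "CARD('a) ^ degree P > 0" using card_ge2[where 'a='a] by simp
  thus ?thesis using True by (simp add: zero_power)
next
  case False
  have G: "Group.group (mult_of R)" by (rule field.field_mult_group[OF field_R])
  have xc: "x \<in> carrier (mult_of R)" using x False by (simp add: R_def)
  have "x [^]\<^bsub>mult_of R\<^esub> Coset.order (mult_of R) = \<one>\<^bsub>mult_of R\<^esub>"
    by (rule group.pow_order_eq_1[OF G xc])
  hence "x ^ (CARD('a) ^ degree P - 1) mod P = 1"
    using xc pow_R[of x] unfolding order_mult nat_pow_mult_of by (simp add: R_def)
  hence "x * (x ^ (CARD('a) ^ degree P - 1) mod P) mod P = x * 1 mod P" by simp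
  hence "x * x ^ (CARD('a) ^ degree P - 1) mod P = x mod P" by (simp add: mod_mult_right_eq)
  moreover have "x * x ^ (CARD('a) ^ degree P - 1) = x ^ (CARD('a) ^ degree P)"
  proof -
    have "CARD('a) ^ degree P \<ge> 1" using card_ge2[where 'a='a] by simp
    thus ?thesis by (cases "CARD('a) ^ degree P") auto
  qed
  ultimately show ?thesis using x by (simp add: mod_poly_less)
qed

lemma fermat_X: "P dvd [:0,1:] ^ (CARD('a) ^ degree P) - [:0,1:]"
proof -
  let ?x = "[:0,1:] mod P"
  have dx: "degree ?x < degree P"
    using degree_mod_less'[of P "[:0,1:]"] P0 degP by (cases "?x = 0") auto
  have "?x ^ (CARD('a) ^ degree P) mod P = ?x" by (rule fermat_R[OF dx])
  hence "[:0,1:] ^ (CARD('a) ^ degree P) mod P = [:0,1:] mod P" by (simp add: power_mod)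
  thus ?thesis by (simp add: mod_eq_dvd_iff)
qed

lemma degree_dvd:
  assumes n: "n > 0" and all: "\<And>a. P dvd a ^ (CARD('a) ^ n) - a"
  shows "degree P dvd n"
proof -
  obtain g where g: "g \<in> carrier (mult_of R)" 
    and ordg: "group.ord (mult_of R) g = Coset.order (mult_of R)"
    using field.finite_field_mult_group_has_gen2[OF field_R finite_R] by blast
  have G: "Group.group (mult_of R)" by (rule field.field_mult_group[OF field_R])
  have g0: "g \<noteq> 0" and dg: "degree g < degree P" using g by (auto simp: R_def)
  have ndvd: "\<not> P dvd g" using g0 dg by (auto simp add: mod_poly_less dvd_eq_mod_eq_0)
  define N where "N = CARD('a) ^ n"
  have N1: "N \<ge> 1" unfolding N_def using card_ge2[where 'a='a] by simp
  have "g ^ N - g = g * (g ^ (N - 1) - 1)"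
  proof -
    have "g ^ N = g * g ^ (N - 1)" using N1 by (cases N) auto
    thus ?thesis by (simp add: algebra_simps)
  qed
  hence "P dvd g * (g ^ (N - 1) - 1)" using all[of g] unfolding N_def by simp
  hence "P dvd g ^ (N - 1) - 1" using irr ndvd by simp
  moreover have "1 mod P = (1 :: 'a poly)" using degP by (simp add: mod_poly_less)
  ultimately have "g ^ (N - 1) mod P = 1" by (simp add: mod_eq_dvd_iff[symmetric])
  hence "g [^]\<^bsub>mult_of R\<^esub> (N - 1) = \<one>\<^bsub>mult_of R\<^esub>"
    using g pow_R[of g] unfolding nat_pow_mult_of by (simp add: R_def)
  hence "group.ord (mult_of R) g dvd N - 1" using group.pow_eq_id[OF G g] by simp
  hence "CARD('a) ^ degree P - 1 dvd CARD('a) ^ n - 1" unfolding ordg order_mult N_def .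
  thus ?thesis using dvd_power_minus_1_conv[of "CARD('a)" "degree P" n] card_ge2[where 'a='a] degP n
    by simp
qed

end


lemma irr_quot_field:
  fixes f :: "'a::{finite,field} poly"
  assumes irr: "irreducible f"
  shows "quot_is_field f"
  unfolding quot_is_field_def
proof (intro conjI allI impI)
  show "\<not> f dvd 1" using irr irreducible_not_unit by blast
  fix a assume "\<not> f dvd a"
  from irr_inverse[OF irr this] show "\<exists>b. f dvd a * b - 1" by blast
qed

lemma carm_factor:
  fixes f P :: "'a::{finite,field} poly"
  assumes mon: "monic f" and carm: "carmichael_poly f" and irr: "irreducible P" 
    and dvd: "P dvd f" and n: "degree f = n" "n > 0"
  shows "degree P dvd n \<and> degree P < n"
proof -
  interpret irr_poly P by unfold_locales (rule irr)
  have f0: "f \<noteq> 0" using mon by auto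
  have qc: "quot_card f = CARD('a) ^ n" using quot_card_eq[OF f0] n by simp
  have all: "P dvd a ^ (CARD('a) ^ n) - a" for a
    using carm dvd unfolding carmichael_poly_def qc by (meson dvd_trans)
  have d1: "degree P dvd n" by (rule degree_dvd[OF n(2) all])
  have le: "degree P \<le> n" using dvd_imp_degree_le[OF dvd f0] n by simp
  have "degree P \<noteq> n"
  proof
    assume eq: "degree P = n"
    obtain c where fc: "f = P * c" using dvd unfolding dvd_def by blast
    have c0: "c \<noteq> 0" using fc f0 by auto
    have "degree f = degree P + degree c" using fc P0 c0 by (simp add: degree_mult_eq)
    hence "degree c = 0" using eq n by simp
    then obtain c0 where cc: "c = [:c0:]" by (metis degree_eq_zeroE)
    have "c0 \<noteq> 0" using c0 cc by auto
    hence "irreducible f" using irr fc cc irreducible_smult_field[of c0 P] by (simp add: mult.commute)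
    hence "quot_is_field f" by (rule irr_quot_field)
    thus False using carm unfolding carmichael_poly_def by simp
  qed
  with le d1 show ?thesis by simp
qed


lemma degree_prod_mset_nz:
  fixes fs :: "'a::idom poly multiset"
  assumes "\<forall>x\<in>#fs. x \<noteq> 0"
  shows "degree (prod_mset fs) = (\<Sum>x\<in>#fs. degree x)"
  using assms
proof (induction fs)
  case empty thus ?case by simp
next
  case (add x fs)
  have "prod_mset fs \<noteq> 0" using add.prems by (auto simp: prod_mset_zero_iff)
  moreover have "x \<noteq> 0" using add.prems by simp
  ultimately show ?case using add by (simp add: degree_mult_eq)
qed

lemma sum_set_le_mset:
  fixes g :: "'b \<Rightarrow> nat"
  shows "(\<Sum>x\<in>set_mset M. g x) \<le> (\<Sum>x\<in>#M. g x)"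
proof (induction M)
  case empty thus ?case by simp
next
  case (add x M)
  have "(\<Sum>x\<in>set_mset (add_mset x M). g x) \<le> g x + (\<Sum>x\<in>set_mset M. g x)"
    by (simp add: sum.insert_if)
  also have "\<dots> \<le> g x + (\<Sum>x\<in>#M. g x)" using add by simp
  finally show ?case by simp
qed

lemma monic_irr_dvd_eq:
  fixes P a :: "'a::field poly"
  assumes "monic P" "irreducible P" "monic a" "irreducible a" "P dvd a"
  shows "P = a"
proof -
  have "P dvd 1 \<or> a dvd P" using irreducibleD'[OF assms(4) assms(5)] by blast
  hence "a dvd P" using irreducible_not_unit[OF assms(2)] by blast
  thus ?thesis using poly_dvd_antisym[OF _ assms(5)] assms(1,3) by simp
qed

lemma card_irr_bound:
  assumes d: "d \<ge> 1"
  shows "d * card {P :: 'a::{finite,field} poly. monic P \<and> irreducible P \<and> degree P = d} \<le> CARD('a) ^ d"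
proof -
  define E where "E = {P :: 'a poly. monic P \<and> irreducible P \<and> degree P = d}"
  define X :: "'a poly" where "X = [:0,1:] ^ (CARD('a) ^ d) - [:0,1:]"
  have qd: "CARD('a) ^ d \<ge> 2"
  proof -
    have "CARD('a) ^ d \<ge> CARD('a) ^ 1" using d card_ge2[where 'a='a] by (intro power_increasing) auto
    thus ?thesis using card_ge2[where 'a='a] by simp
  qed
  have degX: "degree X = CARD('a) ^ d" and monX: "monic X"
  proof -
    have "degree ([:0,1:] ^ (CARD('a) ^ d) :: 'a poly) = CARD('a) ^ d" by (simp add: degree_power_eq)
    moreover have "degree ([:0,1::'a:]) = 1" by simp
    ultimately have "degree ([:0,1:] ^ (CARD('a) ^ d) + - [:0,1::'a:]) = CARD('a) ^ d"
      using qd by (subst degree_add_eq_left) auto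
    moreover have "X = [:0,1:] ^ (CARD('a) ^ d) + - [:0,1::'a:]" unfolding X_def by (rule diff_conv_add_uminus)
    ultimately have "degree X = CARD('a) ^ d" by simp
    moreover have "coeff X (CARD('a) ^ d) = 1"
    proof -
      have "coeff ([:0,1::'a:]) (CARD('a) ^ d) = 0" using qd by (simp add: coeff_pCons split: nat.splits)
      moreover have "coeff ([:0,1::'a:] ^ (CARD('a) ^ d)) (CARD('a) ^ d) = 1"
        using lead_coeff_power[of "[:0,1::'a:]" "CARD('a) ^ d"] by (simp add: degree_power_eq)
      ultimately show ?thesis unfolding X_def by simp
    qed
    ultimately show "degree X = CARD('a) ^ d" "monic X" by auto
  qed
  obtain fs where fs: "X = prod_mset fs" "set_mset fs \<subseteq> {q. irreducible q \<and> monic q}"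
    using exactly_one_monic_factorization[OF monX] by blast
  have sub: "E \<subseteq> set_mset fs"
  proof
    fix P assume P: "P \<in> E"
    hence Pm: "monic P" "irreducible P" "degree P = d" unfolding E_def by auto
    interpret irr_poly P by unfold_locales (rule Pm(2))
    have "P dvd X" using fermat_X Pm(3) unfolding X_def by simp
    then obtain a where a: "a \<in># fs" "P dvd a" using irreducible_dvd_prod_mset[OF Pm(2)] fs(1) by auto
    have "P = a" using monic_irr_dvd_eq[OF Pm(1,2) _ _ a(2)] a(1) fs(2) by auto
    thus "P \<in> set_mset fs" using a(1) by simp
  qed
  have "d * card E = (\<Sum>P\<in>E. degree P)" unfolding E_def by simp
  also have "\<dots> \<le> (\<Sum>P\<in>set_mset fs. degree P)" by (rule sum_mono2[OF _ sub]) auto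
  also have "\<dots> \<le> (\<Sum>P\<in>#fs. degree P)" by (rule sum_set_le_mset)
  also have "\<dots> = degree X"
  proof -
    have "\<forall>x\<in>#fs. x \<noteq> 0" using fs(2) by auto
    from degree_prod_mset_nz[OF this] show ?thesis using fs(1) by simp
  qed
  finally show ?thesis unfolding E_def degX .
qed


lemma finite_msets_bounded:
  assumes "finite A"
  shows "finite {M. set_mset M \<subseteq> A \<and> size M \<le> N}"
proof -
  have "{M. set_mset M \<subseteq> A \<and> size M \<le> N} \<subseteq> mset ` {xs. set xs \<subseteq> A \<and> length xs \<le> N}"
  proof
    fix M assume M: "M \<in> {M. set_mset M \<subseteq> A \<and> size M \<le> N}"
    obtain xs where xs: "mset xs = M" using ex_mset by blast
    thus "M \<in> mset ` {xs. set xs \<subseteq> A \<and> length xs \<le> N}" using M by auto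
  qed
  moreover have "finite (mset ` {xs. set xs \<subseteq> A \<and> length xs \<le> N})"
    using finite_lists_length_le[OF assms] by simp
  ultimately show ?thesis by (rule finite_subset)
qed

lemma geo_le:
  fixes y :: real
  assumes "0 \<le> y" "y < 1"
  shows "(\<Sum>k\<le>N. y ^ k) \<le> 1 / (1 - y)"
proof -
  have "(\<Sum>k\<le>N. y ^ k) = (\<Sum>k<Suc N. y ^ k)" by (simp add: lessThan_Suc_atMost)
  also have "\<dots> = (1 - y ^ Suc N) / (1 - y)" using assms sum_gp_strict[of y "Suc N"] by (simp del: sum.lessThan_Suc)
  also have "\<dots> \<le> 1 / (1 - y)" using assms by (intro divide_right_mono) auto
  finally show ?thesis .
qed

lemma rankin:
  fixes w :: "'b \<Rightarrow> nat" and x :: real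
  assumes fin: "finite A" and w: "\<forall>a\<in>A. w a \<ge> 1" and x: "0 \<le> x" "x < 1"
  shows "(\<Sum>M\<in>{M. set_mset M \<subseteq> A \<and> size M \<le> N}. x ^ (\<Sum>a\<in>#M. w a)) \<le> (\<Prod>a\<in>A. 1 / (1 - x ^ w a))"
  using fin w
proof (induction A rule: finite_induct)
  case empty
  have "{M :: 'b multiset. set_mset M \<subseteq> {} \<and> size M \<le> N} = {{#}}" by auto
  show ?case by (simp only: \<open>{M :: 'b multiset. set_mset M \<subseteq> {} \<and> size M \<le> N} = {{#}}\<close>) simp
next
  case (insert a A)
  define B :: "'b set \<Rightarrow> 'b multiset set" where "B = (\<lambda>A. {M. set_mset M \<subseteq> A \<and> size M \<le> N})"
  define wt where "wt = (\<lambda>M. \<Sum>a\<in>#M. w a)"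
  define \<phi> where "\<phi> = (\<lambda>M. (count M a, filter_mset (\<lambda>y. y \<noteq> a) M))"
  define h where "h = (\<lambda>(k::nat, M'). x ^ (w a * k) * x ^ wt M')"
  have finB: "finite (B A)" "finite (B (insert a A))" unfolding B_def
    using finite_msets_bounded[OF insert.hyps(1)] finite_msets_bounded[of "insert a A"] insert.hyps(1) by auto
  have split: "M = replicate_mset (count M a) a + filter_mset (\<lambda>y. y \<noteq> a) M" for M :: "'b multiset"
  proof -
    have "M = filter_mset (\<lambda>y. y = a) M + filter_mset (\<lambda>y. \<not> (y = a)) M" by (rule multiset_partition)
    also have "filter_mset (\<lambda>y. y = a) M = replicate_mset (count M a) a" 
      by (metis filter_eq_replicate_mset)
    finally show ?thesis by simp
  qed
  have hphi: "x ^ wt M = h (\<phi> M)" for M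
  proof -
    have "wt M = wt (replicate_mset (count M a) a) + wt (filter_mset (\<lambda>y. y \<noteq> a) M)"
      unfolding wt_def by (subst split[of M]) (simp del: image_mset_filter_mset_swap)
    also have "wt (replicate_mset (count M a) a) = w a * count M a" unfolding wt_def by simp
    finally show ?thesis unfolding h_def \<phi>_def by (simp add: power_add)
  qed
  have inj: "inj_on \<phi> (B (insert a A))"
  proof (rule inj_onI)
    fix M1 M2 assume "\<phi> M1 = \<phi> M2"
    hence "count M1 a = count M2 a" "filter_mset (\<lambda>y. y \<noteq> a) M1 = filter_mset (\<lambda>y. y \<noteq> a) M2"
      unfolding \<phi>_def by auto
    thus "M1 = M2" using split[of M1] split[of M2] by simp
  qed
  have img: "\<phi> ` B (insert a A) \<subseteq> {..N} \<times> B A"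
  proof
    fix p assume "p \<in> \<phi> ` B (insert a A)"
    then obtain M where M: "M \<in> B (insert a A)" "p = \<phi> M" by auto
    have "count M a \<le> size M" by (rule count_le_size)
    moreover have "size (filter_mset (\<lambda>y. y \<noteq> a) M) \<le> N"
      by (rule le_trans[OF size_filter_mset_lesseq]) (use M(1) in \<open>simp add: B_def\<close>)
    moreover have "set_mset (filter_mset (\<lambda>y. y \<noteq> a) M) \<subseteq> A" using M(1) unfolding B_def by auto
    ultimately show "p \<in> {..N} \<times> B A" using M unfolding B_def \<phi>_def by auto
  qed
  have hnn: "h p \<ge> 0" for p unfolding h_def using x by (auto split: prod.splits)
  have "(\<Sum>M\<in>B (insert a A). x ^ wt M) = (\<Sum>M\<in>B (insert a A). h (\<phi> M))" using hphi by simp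
  also have "\<dots> = (\<Sum>p\<in>\<phi> ` B (insert a A). h p)" by (simp add: sum.reindex[OF inj])
  also have "\<dots> \<le> (\<Sum>p\<in>{..N} \<times> B A. h p)"
    by (rule sum_mono2) (use finB img hnn in auto)
  also have "\<dots> = (\<Sum>k\<le>N. (x ^ w a) ^ k) * (\<Sum>M\<in>B A. x ^ wt M)"
    unfolding h_def by (simp add: sum.cartesian_product[symmetric] sum_product power_mult)
  also have "\<dots> \<le> (1 / (1 - x ^ w a)) * (\<Prod>a\<in>A. 1 / (1 - x ^ w a))"
  proof (rule mult_mono)
    have wa: "w a \<ge> 1" using insert.prems by simp
    have "x ^ w a < 1" using x wa by (simp add: power_less_one_iff)
    thus "(\<Sum>k\<le>N. (x ^ w a) ^ k) \<le> 1 / (1 - x ^ w a)" using x by (intro geo_le) auto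
    show "(\<Sum>M\<in>B A. x ^ wt M) \<le> (\<Prod>a\<in>A. 1 / (1 - x ^ w a))"
      using insert.IH insert.prems unfolding B_def wt_def by simp
    show "0 \<le> 1 / (1 - x ^ w a)" using \<open>x ^ w a < 1\<close> by simp
    show "0 \<le> (\<Sum>M\<in>B A. x ^ wt M)" using x by (intro sum_nonneg) simp
  qed
  also have "\<dots> = (\<Prod>a\<in>insert a A. 1 / (1 - x ^ w a))" using insert.hyps by simp
  finally show ?case unfolding B_def wt_def .
qed


lemma harm_le: "K \<ge> 1 \<Longrightarrow> harm K \<le> ln (real K) + 1"
  using euler_mascheroni_sequence_decreasing[of 1 K] by (simp add: harm_def)

definition Dn :: "nat \<Rightarrow> nat set" where "Dn n = {d. d dvd n \<and> d < n}"

lemma finite_Dn: "finite (Dn n)" unfolding Dn_def by auto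

lemma Dn_pos: "n > 0 \<Longrightarrow> d \<in> Dn n \<Longrightarrow> d \<ge> 1"
  unfolding Dn_def by (cases "d = 0") auto

lemma Dn_half: "d \<in> Dn n \<Longrightarrow> 2 * d \<le> n"
proof -
  assume "d \<in> Dn n"
  then obtain k where k: "n = d * k" "d < n" unfolding Dn_def by (auto elim: dvdE)
  hence "k \<ge> 2" by (cases k; cases "k - 1") auto
  thus "2 * d \<le> n" using k by (metis mult.commute mult_le_mono2)
qed

lemma small_part:
  fixes c T :: real
  assumes n: "n \<ge> 1" and c: "c \<ge> 0" and T: "T \<ge> 1"
  shows "(\<Sum>d\<in>{d\<in>Dn n. real d \<le> T}. real n powr (c * real d) / real d) \<le> real n powr (c * T) * (ln T + 1)"
proof -
  define K where "K = nat \<lfloor>T\<rfloor>"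
  have K1: "K \<ge> 1" unfolding K_def using T by linarith
  have KT: "real K \<le> T" unfolding K_def using T by linarith
  have sub: "{d\<in>Dn n. real d \<le> T} \<subseteq> {1..K}"
  proof
    fix d assume d: "d \<in> {d\<in>Dn n. real d \<le> T}"
    hence "d \<ge> 1" using Dn_pos[of n d] n by auto
    moreover have "d \<le> K" using d unfolding K_def by (auto simp: le_nat_floor)
    ultimately show "d \<in> {1..K}" by simp
  qed
  have "(\<Sum>d\<in>{d\<in>Dn n. real d \<le> T}. real n powr (c * real d) / real d)
        \<le> (\<Sum>d\<in>{d\<in>Dn n. real d \<le> T}. real n powr (c * T) * (1 / real d))"
  proof (rule sum_mono)
    fix d assume d: "d \<in> {d\<in>Dn n. real d \<le> T}"
    have "real n powr (c * real d) \<le> real n powr (c * T)"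
      using n c d by (intro powr_mono mult_left_mono) auto
    thus "real n powr (c * real d) / real d \<le> real n powr (c * T) * (1 / real d)"
      by (simp add: divide_right_mono)
  qed
  also have "\<dots> = real n powr (c * T) * (\<Sum>d\<in>{d\<in>Dn n. real d \<le> T}. 1 / real d)"
    by (simp add: sum_distrib_left)
  also have "\<dots> \<le> real n powr (c * T) * (\<Sum>d\<in>{1..K}. 1 / real d)"
    by (intro mult_left_mono sum_mono2 sub) auto
  also have "(\<Sum>d\<in>{1..K}. 1 / real d) = harm K" by (simp add: harm_def inverse_eq_divide)
  also have "real n powr (c * T) * harm K \<le> real n powr (c * T) * (ln T + 1)"
  proof (rule mult_left_mono)
    have "harm K \<le> ln (real K) + 1" by (rule harm_le[OF K1])
    also have "ln (real K) \<le> ln T" using K1 KT by simp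
    finally show "harm K \<le> ln T + 1" by simp
  qed simp
  finally show ?thesis .
qed

lemma large_part:
  fixes T :: real
  assumes n: "n \<ge> 1" and T: "T > 0"
  shows "(\<Sum>d\<in>{d\<in>Dn n. real d > T}. real n powr (3 * real d / (2 * real n)) / real d)
          \<le> (real n / T) * real n powr (3/4) / T"
proof -
  define A where "A = {d\<in>Dn n. real d > T}"
  have "(\<Sum>d\<in>A. real n powr (3 * real d / (2 * real n)) / real d) \<le> (\<Sum>d\<in>A. real n powr (3/4) / T)"
  proof (rule sum_mono)
    fix d assume d: "d \<in> A"
    have "2 * d \<le> n" using d Dn_half unfolding A_def by auto
    hence "3 * real d / (2 * real n) \<le> 3/4" using n by (simp add: field_simps)
    hence "real n powr (3 * real d / (2 * real n)) \<le> real n powr (3/4)" using n by (intro powr_mono) auto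
    moreover have "real d > T" using d unfolding A_def by simp
    ultimately show "real n powr (3 * real d / (2 * real n)) / real d \<le> real n powr (3/4) / T"
      using T by (intro frac_le) auto
  qed
  also have "\<dots> = real (card A) * (real n powr (3/4) / T)" by simp
  also have "real (card A) \<le> real n / T"
  proof -
    define K where "K = nat \<lfloor>real n / T\<rfloor>"
    have inj: "inj_on (\<lambda>d. n div d) A"
    proof (rule inj_onI)
      fix d1 d2 assume d: "d1 \<in> A" "d2 \<in> A" "n div d1 = n div d2"
      have "d1 dvd n" "d2 dvd n" using d unfolding A_def Dn_def by auto
      hence "d1 * (n div d1) = n" "d2 * (n div d2) = n" by simp_all
      moreover have "n div d1 > 0" using \<open>d1 dvd n\<close> n
        by (metis \<open>d1 * (n div d1) = n\<close> gr0I mult_0_right not_one_le_zero)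
      ultimately show "d1 = d2" using d(3) by (metis mult_right_cancel neq0_conv)
    qed
    have img: "(\<lambda>d. n div d) ` A \<subseteq> {1..K}"
    proof
      fix m assume "m \<in> (\<lambda>d. n div d) ` A"
      then obtain d where d: "d \<in> A" "m = n div d" by auto
      have dn: "d dvd n" and dT: "real d > T" using d unfolding A_def Dn_def by auto
      have dm: "d * m = n" using dn d(2) by simp
      hence "m \<ge> 1" using n by (cases m) auto
      moreover have "real m \<le> real n / T"
      proof -
        have "real d * real m = real n" using dm by (metis of_nat_mult)
        hence "T * real m \<le> real n" using dT by (metis mult_right_mono of_nat_0_le_iff less_imp_le)
        thus ?thesis using T by (simp add: field_simps)
      qed
      hence "m \<le> K" unfolding K_def by (simp add: le_nat_floor)
      ultimately show "m \<in> {1..K}" by simp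
    qed
    have "card A = card ((\<lambda>d. n div d) ` A)" by (rule card_image[OF inj, symmetric])
    also have "\<dots> \<le> card {1..K}" by (rule card_mono[OF _ img]) simp
    finally have "card A \<le> K" by simp
    moreover have "real K \<le> real n / T" unfolding K_def using T n
      by (metis divide_nonneg_pos of_nat_0_le_iff of_nat_floor floor_of_nat)
    ultimately show ?thesis by linarith
  qed
  hence "real (card A) * (real n powr (3/4) / T) \<le> (real n / T) * (real n powr (3/4) / T)"
    using T by (intro mult_right_mono) auto
  finally show ?thesis unfolding A_def by simp
qed


lemma size_le_wt:
  assumes "\<forall>a\<in>#M. 1 \<le> (w a :: nat)"
  shows "size M \<le> (\<Sum>a\<in>#M. w a)"
  using assms by (induction M) auto

lemma finite_deg_le: "finite {r :: 'a::{finite,field} poly. degree r \<le> n}"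
  by (rule finite_subset[OF _ finite_deg_less[of "Suc n"]]) auto

definition carm_primes :: "'a::{finite,field} itself \<Rightarrow> nat \<Rightarrow> 'a poly set" where
  "carm_primes _ n = {P. monic P \<and> irreducible P \<and> degree P dvd n \<and> degree P < n}"

lemma finite_carm_primes: "finite (carm_primes TYPE('a::{finite,field}) n)"
  by (rule finite_subset[OF _ finite_deg_le[of n]]) (auto simp: carm_primes_def)

lemma count_le:
  fixes x :: real
  assumes n: "n > 0" and x: "0 \<le> x" "x < 1"
  shows "real (carmichael_count TYPE('a::{finite,field}) n) * x ^ n 
           \<le> (\<Prod>P\<in>carm_primes TYPE('a) n. 1 / (1 - x ^ degree P))"
proof -
  define S where "S = {f :: 'a poly. lead_coeff f = 1 \<and> degree f = n \<and> carmichael_poly f}"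
  define PS where "PS = carm_primes TYPE('a) n"
  define fac where "fac = (\<lambda>f::'a poly. THE fs. f = prod_mset fs \<and> set_mset fs \<subseteq> {q. irreducible q \<and> monic q})"
  define B where "B = {M. set_mset M \<subseteq> PS \<and> size M \<le> n}"
  have fac: "f = prod_mset (fac f) \<and> set_mset (fac f) \<subseteq> {q. irreducible q \<and> monic q}" if "monic f" for f
    unfolding fac_def by (rule theI'[OF exactly_one_monic_factorization[OF that]])
  have facS: "fac f \<in> B \<and> (\<Sum>P\<in>#fac f. degree P) = n" if f: "f \<in> S" for f
  proof -
    have mon: "monic f" and dn: "degree f = n" and carm: "carmichael_poly f" using f unfolding S_def by auto
    note ff = fac[OF mon]
    have sub: "set_mset (fac f) \<subseteq> PS"
    proof
      fix P assume P: "P \<in> set_mset (fac f)"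
      have irrP: "irreducible P" and monP: "monic P" using P ff by auto
      have "P dvd prod_mset (fac f)" using P by (rule dvd_prod_mset)
      hence "P dvd f" using ff by simp
      from carm_factor[OF mon carm irrP this dn n] show "P \<in> PS"
        unfolding PS_def carm_primes_def using irrP monP by auto
    qed
    have wt: "(\<Sum>P\<in>#fac f. degree P) = n"
    proof -
      have "\<forall>x\<in>#fac f. x \<noteq> 0" using ff by auto
      from degree_prod_mset_nz[OF this] show ?thesis using ff dn by simp
    qed
    have "\<forall>a\<in>#fac f. 1 \<le> degree a" using ff irreducible_degree_field by fastforce
    from size_le_wt[OF this] have "size (fac f) \<le> n" using wt by simp
    thus ?thesis using sub wt unfolding B_def by simp
  qed
  have inj: "inj_on fac S"
  proof (rule inj_onI)
    fix f g assume fg: "f \<in> S" "g \<in> S" "fac f = fac g"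
    have mf: "monic f" "monic g" using fg(1,2) unfolding S_def by auto
    have "f = prod_mset (fac f)" using fac[OF mf(1)] by blast
    also have "\<dots> = prod_mset (fac g)" using fg(3) by simp
    also have "\<dots> = g" using fac[OF mf(2)] by simp
    finally show "f = g" .
  qed
  have finB: "finite B" unfolding B_def PS_def by (rule finite_msets_bounded[OF finite_carm_primes])
  have imgB: "fac ` S \<subseteq> B" using facS by auto
  have "real (carmichael_count TYPE('a) n) * x ^ n = real (card (fac ` S)) * x ^ n"
    unfolding carmichael_count_def S_def[symmetric] card_image[OF inj] ..
  also have "\<dots> = (\<Sum>M\<in>fac ` S. x ^ (\<Sum>P\<in>#M. degree P))"
  proof -
    have "(\<Sum>M\<in>fac ` S. x ^ (\<Sum>P\<in>#M. degree P)) = (\<Sum>M\<in>fac ` S. x ^ n)"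
      by (rule sum.cong) (use facS in auto)
    thus ?thesis by simp
  qed
  also have "\<dots> \<le> (\<Sum>M\<in>B. x ^ (\<Sum>P\<in>#M. degree P))"
    by (rule sum_mono2[OF finB imgB]) (use x in auto)
  also have "\<dots> \<le> (\<Prod>P\<in>PS. 1 / (1 - x ^ degree P))"
    unfolding B_def
    by (rule rankin) (use x finite_carm_primes[where 'a='a and n=n] in \<open>auto simp: PS_def carm_primes_def intro: Suc_leI irreducible_degree_field\<close>)
  finally show ?thesis unfolding PS_def .
qed


lemma powr_facts:
  fixes n :: real assumes n: "n \<ge> 1"
  shows "n / n powr (9/10) = n powr (1/10)"
    and "n powr (1/10) * n powr (3/4) / n powr (9/10) \<le> 1"
    and "3 / (2 * n) * n powr (9/10) = 3/2 * n powr (-1/10)"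
proof -
  have n0: "n > 0" using n by simp
  have e: "n = n powr 1" using n0 by simp
  have "n powr (1/10) * n powr (9/10) = n powr 1" by (simp add: powr_add[symmetric])
  hence "n powr (1/10) * n powr (9/10) = n" using n0 by simp
  moreover have "n powr (9/10) > 0" using n0 by simp
  ultimately show "n / n powr (9/10) = n powr (1/10)" by (simp add: field_simps)
  have "n powr (1/10) * n powr (3/4) / n powr (9/10) = n powr (1/10 + 3/4 - 9/10)"
    by (simp only: powr_add powr_diff)
  also have "\<dots> \<le> n powr 0" using n by (intro powr_mono) auto
  finally show "n powr (1/10) * n powr (3/4) / n powr (9/10) \<le> 1" using n0 by simp
  have "n powr (9/10) = n powr (-1/10) * n powr 1" using powr_add[of n "-1/10" 1] by simp
  thus "3 / (2 * n) * n powr (9/10) = 3/2 * n powr (-1/10)" using n0 by simp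
qed

lemma analytic:
  fixes \<epsilon> :: real
  assumes eps: "0 < \<epsilon>" "\<epsilon> < 1/2"
  shows "\<exists>N::nat. \<forall>n\<ge>N. n \<ge> 1 \<and> real n powr (3/(2*real n)) \<le> 6/5 \<and> 
     (\<forall>q::real. q \<ge> 2 \<longrightarrow> (\<Sum>d\<in>Dn n. real n powr (3*real d/(2*real n))/real d 
         + 5/2 * ((real n powr (3/(2*real n)))^2/q)^d / real d) \<le> (1+\<epsilon>) * ln (real n))"
proof -
  have l1: "(\<lambda>n::nat. real n powr (3 / (2 * real n))) \<longlonglongrightarrow> 1" by real_asymp
  have l2: "(\<lambda>n::nat. real n powr (3/2 * real n powr (-1/10))) \<longlonglongrightarrow> 1" by real_asymp
  have l3: "filterlim (\<lambda>n::nat. ln (real n)) at_top sequentially" by real_asymp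
  have ev: "eventually (\<lambda>n::nat. real n powr (3 / (2 * real n)) < 6/5 \<and> 
              real n powr (3/2 * real n powr (-1/10)) < 1 + \<epsilon>/2 \<and> ln (real n) \<ge> 113) sequentially"
  proof (intro eventually_conj)
    show "eventually (\<lambda>n::nat. real n powr (3 / (2 * real n)) < 6/5) sequentially"
      by (rule order_tendstoD(2)[OF l1]) simp
    show "eventually (\<lambda>n::nat. real n powr (3/2 * real n powr (-1/10)) < 1 + \<epsilon>/2) sequentially"
      by (rule order_tendstoD(2)[OF l2]) (use eps in simp)
    show "eventually (\<lambda>n::nat. ln (real n) \<ge> 113) sequentially"
      using l3 unfolding filterlim_at_top by blast
  qed
  then obtain N where N: "\<And>n. n \<ge> N \<Longrightarrow> real n powr (3 / (2 * real n)) < 6/5 \<and> 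
              real n powr (3/2 * real n powr (-1/10)) < 1 + \<epsilon>/2 \<and> ln (real n) \<ge> 113"
    unfolding eventually_sequentially by blast
  show ?thesis
  proof (intro exI allI impI conjI)
    fix n assume nN: "N \<le> n"
    note Nn = N[OF nN]
    have n1: "n \<ge> 1"
    proof (rule ccontr)
      assume "\<not> n \<ge> 1" hence "n = 0" by simp
      thus False using Nn by simp
    qed
    thus "n \<ge> 1" .
    define r where "r = real n powr (3 / (2 * real n))"
    define L where "L = ln (real n)"
    have r65: "r \<le> 6/5" using Nn unfolding r_def by simp
    thus "real n powr (3/(2*real n)) \<le> 6/5" unfolding r_def .
    have r0: "r \<ge> 0" unfolding r_def by simp
    fix q :: real assume q: "q \<ge> 2"
    have z: "r^2 / q \<le> 18/25"
    proof -
      have "r^2 \<le> (6/5)^2" using r0 r65 by (intro power_mono) auto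
      moreover have "((6::real)/5)^2 = 36/25" by (simp add: power2_eq_square)
      ultimately have "r^2 \<le> 36/25" by simp
      hence "r^2 / q \<le> (36/25) / 2" using q by (intro frac_le) auto
      thus ?thesis by simp
    qed
    have z0: "r^2 / q \<ge> 0" using q by simp
    have A: "(\<Sum>d\<in>Dn n. 5/2 * (r^2/q)^d / real d) \<le> 9"
    proof -
      have "(\<Sum>d\<in>Dn n. 5/2 * (r^2/q)^d / real d) \<le> (\<Sum>d\<in>Dn n. 5/2 * (18/25)^d)"
      proof (rule sum_mono)
        fix d assume d: "d \<in> Dn n"
        have d1: "real d \<ge> 1" using Dn_pos[OF _ d] n1 by simp
        have "(r^2/q)^d \<le> (18/25)^d" using z z0 by (intro power_mono) auto
        moreover have "(r^2/q)^d / real d \<le> (r^2/q)^d / 1"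
          by (rule divide_left_mono) (use d1 z0 in auto)
        ultimately have "(r^2/q)^d / real d \<le> (18/25)^d" by simp
        thus "5/2 * (r^2/q)^d / real d \<le> 5/2 * (18/25)^d" by simp
      qed
      also have "\<dots> \<le> (\<Sum>d\<le>n. 5/2 * ((18::real)/25)^d)"
        by (rule sum_mono2) (auto simp: Dn_def)
      also have "\<dots> = 5/2 * (\<Sum>d\<le>n. ((18::real)/25)^d)" by (simp add: sum_distrib_left)
      also have "(\<Sum>d\<le>n. ((18::real)/25)^d) \<le> 1 / (1 - 18/25)" by (rule geo_le) auto
      finally show ?thesis by simp
    qed
    define T where "T = real n powr (9/10)"
    have T1: "T \<ge> 1" unfolding T_def by (rule ge_one_powr_ge_zero) (use n1 in auto)
    have split: "Dn n = {d\<in>Dn n. real d \<le> T} \<union> {d\<in>Dn n. real d > T}" by auto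
    have eqB: "(\<Sum>d\<in>Dn n. real n powr (3*real d/(2*real n))/real d) = 
      (\<Sum>d\<in>{d\<in>Dn n. real d \<le> T}. real n powr (3/(2*real n) * real d)/real d) +
      (\<Sum>d\<in>{d\<in>Dn n. real d > T}. real n powr (3*real d/(2*real n))/real d)"
      by (subst split, subst sum.union_disjoint) (auto simp: finite_Dn)
    have small: "(\<Sum>d\<in>{d\<in>Dn n. real d \<le> T}. real n powr (3/(2*real n) * real d)/real d)
      \<le> real n powr (3/2 * real n powr (-1/10)) * (9/10 * L + 1)"
    proof -
      have "(\<Sum>d\<in>{d\<in>Dn n. real d \<le> T}. real n powr (3/(2*real n) * real d)/real d)
            \<le> real n powr (3/(2*real n) * T) * (ln T + 1)"
        by (rule small_part[OF n1 _ T1]) simp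
      also have "3/(2*real n) * T = 3/2 * real n powr (-1/10)"
        unfolding T_def using powr_facts(3)[of "real n"] n1 by simp
      also have "ln T = 9/10 * L" unfolding T_def L_def using n1 by (simp add: ln_powr)
      finally show ?thesis .
    qed
    have large: "(\<Sum>d\<in>{d\<in>Dn n. real d > T}. real n powr (3*real d/(2*real n))/real d) \<le> 1"
    proof -
      have "(\<Sum>d\<in>{d\<in>Dn n. real d > T}. real n powr (3*real d/(2*real n))/real d)
             \<le> (real n / T) * real n powr (3/4) / T"
        by (rule large_part[OF n1]) (use T1 in simp)
      also have "\<dots> = real n powr (1/10) * real n powr (3/4) / real n powr (9/10)"
        unfolding T_def using powr_facts(1)[of "real n"] n1 by simp
      also have "\<dots> \<le> 1" using powr_facts(2)[of "real n"] n1 by simp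
      finally show ?thesis .
    qed
    have R0: "real n powr (3/2 * real n powr (-1/10)) \<le> 1 + \<epsilon>/2" using Nn by simp
    have L113: "L \<ge> 113" using Nn unfolding L_def by simp
    have "(\<Sum>d\<in>Dn n. real n powr (3*real d/(2*real n))/real d + 5/2 * (r^2/q)^d / real d)
       = (\<Sum>d\<in>Dn n. real n powr (3*real d/(2*real n))/real d) + (\<Sum>d\<in>Dn n. 5/2 * (r^2/q)^d / real d)"
      by (simp add: sum.distrib)
    also have "\<dots> \<le> (1 + \<epsilon>/2) * (9/10 * L + 1) + 1 + 9"
    proof -
      have "real n powr (3/2 * real n powr (-1/10)) * (9/10 * L + 1) \<le> (1 + \<epsilon>/2) * (9/10 * L + 1)"
        using R0 L113 by (intro mult_right_mono) auto
      thus ?thesis using eqB small large A by linarith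
    qed
    also have "\<dots> \<le> (1 + \<epsilon>) * L"
    proof -
      have e1: "(1 + \<epsilon>/2) * (9/10 * L + 1) + 1 + 9 = 9/10*L + 9/20*(L*\<epsilon>) + \<epsilon>/2 + 11"
        by (simp add: algebra_simps)
      have e2: "(1 + \<epsilon>) * L = L + L*\<epsilon>" by (simp add: algebra_simps)
      have "0 \<le> L * \<epsilon>" using L113 eps by simp
      thus ?thesis unfolding e1 e2 using L113 eps by linarith
    qed
    finally show "(\<Sum>d\<in>Dn n. real n powr (3*real d/(2*real n))/real d 
         + 5/2 * ((real n powr (3/(2*real n)))^2/q)^d / real d) \<le> (1+\<epsilon>) * ln (real n)"
      unfolding r_def L_def .
  qed
qed


lemma one_div_le_exp:
  fixes y :: real
  assumes y: "0 \<le> y" "y \<le> 3/5"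
  shows "1 / (1 - y) \<le> exp (y + 5/2 * y^2)"
proof -
  have pos: "1 / (1 - y) > 0" using y by simp
  have "ln (1 / (1 - y)) \<le> 1 / (1 - y) - 1" by (rule ln_le_minus_one[OF pos])
  also have "1 / (1 - y) - 1 = y + y^2 / (1 - y)" using y by (simp add: field_simps power2_eq_square)
  also have "y^2 / (1 - y) \<le> y^2 / (2/5)" using y by (intro divide_left_mono) auto
  also have "y^2 / (2/5) = 5/2 * y^2" by simp
  finally have "ln (1 / (1 - y)) \<le> y + 5/2 * y^2" by simp
  hence "exp (ln (1 / (1 - y))) \<le> exp (y + 5/2 * y^2)" by simp
  thus ?thesis by (subst (asm) exp_ln[OF pos])
qed

lemma prod_exp:
  fixes y :: "'b \<Rightarrow> real"
  assumes "\<forall>a\<in>A. 0 \<le> y a \<and> y a \<le> 3/5" and fin: "finite A"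
  shows "(\<Prod>a\<in>A. 1 / (1 - y a)) \<le> exp (\<Sum>a\<in>A. y a + 5/2 * (y a)^2)"
proof -
  have "(\<Prod>a\<in>A. 1 / (1 - y a)) \<le> (\<Prod>a\<in>A. exp (y a + 5/2 * (y a)^2))"
    by (rule prod_mono) (use assms one_div_le_exp in auto)
  also have "\<dots> = exp (\<Sum>a\<in>A. y a + 5/2 * (y a)^2)" by (rule exp_sum[OF fin, symmetric])
  finally show ?thesis .
qed

lemma group_degree:
  fixes g :: "nat \<Rightarrow> real"
  assumes n: "n > 0" and g: "\<forall>d. g d \<ge> 0"
  shows "(\<Sum>P\<in>carm_primes TYPE('a::{finite,field}) n. g (degree P)) 
           \<le> (\<Sum>d\<in>Dn n. real CARD('a) ^ d / real d * g d)"
proof -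
  define S where "S = carm_primes TYPE('a) n"
  have img: "degree ` S \<subseteq> Dn n" unfolding S_def carm_primes_def Dn_def by auto
  have "(\<Sum>P\<in>S. g (degree P)) = (\<Sum>d\<in>Dn n. \<Sum>P\<in>{P\<in>S. degree P = d}. g (degree P))"
    by (rule sum.group[symmetric]) (use img finite_Dn finite_carm_primes in \<open>auto simp: S_def\<close>)
  also have "\<dots> \<le> (\<Sum>d\<in>Dn n. real CARD('a) ^ d / real d * g d)"
  proof (rule sum_mono)
    fix d assume d: "d \<in> Dn n"
    have d1: "d \<ge> 1" using Dn_pos[OF n d] .
    have fib: "{P\<in>S. degree P = d} = {P :: 'a poly. monic P \<and> irreducible P \<and> degree P = d}"
      using d unfolding S_def carm_primes_def Dn_def by auto
    have "(\<Sum>P\<in>{P\<in>S. degree P = d}. g (degree P)) = real (card {P\<in>S. degree P = d}) * g d"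
      by simp
    also have "\<dots> \<le> real CARD('a) ^ d / real d * g d"
    proof (rule mult_right_mono)
      have "d * card {P :: 'a poly. monic P \<and> irreducible P \<and> degree P = d} \<le> CARD('a) ^ d"
        by (rule card_irr_bound[OF d1])
      hence "real (d * card {P\<in>S. degree P = d}) \<le> real (CARD('a) ^ d)"
        unfolding fib by (rule of_nat_mono)
      hence "real d * real (card {P\<in>S. degree P = d}) \<le> real CARD('a) ^ d" by simp
      thus "real (card {P\<in>S. degree P = d}) \<le> real CARD('a) ^ d / real d"
        using d1 by (simp add: field_simps)
    qed (use g in auto)
    finally show "(\<Sum>P\<in>{P\<in>S. degree P = d}. g (degree P)) \<le> real CARD('a) ^ d / real d * g d" .
  qed
  finally show ?thesis unfolding S_def .
qed


theorem theorem4p6: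
  fixes \<epsilon> :: real
  assumes "0 < \<epsilon>" and "\<epsilon> < 1/2"
  shows "\<exists>c::real. \<forall>n::nat. n > 1 \<and> \<not> prime n \<and> real n > c \<longrightarrow>
           real (carmichael_count TYPE('a::{finite,field}) n)
             \<le> real (card (UNIV :: 'a set)) ^ n / real n powr (1/2 - \<epsilon>)"
proof -
  obtain N :: nat where N: "\<And>n. n \<ge> N \<Longrightarrow> n \<ge> 1 \<and> real n powr (3/(2*real n)) \<le> 6/5 \<and> 
     (\<forall>q::real. q \<ge> 2 \<longrightarrow> (\<Sum>d\<in>Dn n. real n powr (3*real d/(2*real n))/real d 
         + 5/2 * ((real n powr (3/(2*real n)))^2/q)^d / real d) \<le> (1+\<epsilon>) * ln (real n))"
    using analytic[OF assms] by blast
  show ?thesis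
  proof (intro exI allI impI)
    fix n :: nat assume "1 < n \<and> \<not> prime n \<and> real N < real n"
    hence nN: "n \<ge> N" by simp
    note Nn = N[OF nN]
    have n1: "n \<ge> 1" using Nn by simp
    have n0: "real n > 0" using n1 by simp
    define q where "q = real CARD('a)"
    have q2: "q \<ge> 2" unfolding q_def using card_ge2[where 'a='a] by simp
    define r where "r = real n powr (3/(2*real n))"
    have r0: "r > 0" unfolding r_def using n0 by simp
    have r65: "r \<le> 6/5" using Nn unfolding r_def by simp
    define x where "x = r / q"
    have x0: "0 \<le> x" unfolding x_def using r0 q2 by simp
    have x35: "x \<le> 3/5" unfolding x_def using r65 q2 by (simp add: field_simps)
    have xpow: "x ^ d = r ^ d / q ^ d" for d unfolding x_def by (simp add: power_divide)
    have rpow: "r ^ d = real n powr (3 * real d / (2 * real n))" for d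
    proof -
      have "r ^ d = r powr real d" using r0 by (simp add: powr_realpow)
      also have "\<dots> = real n powr (3/(2*real n) * real d)" unfolding r_def by (simp add: powr_powr)
      finally show ?thesis by simp
    qed
    have PS: "\<forall>P\<in>carm_primes TYPE('a) n. 0 \<le> x ^ degree P \<and> x ^ degree P \<le> 3/5"
    proof
      fix P assume "P \<in> carm_primes TYPE('a) n"
      hence "degree P \<ge> 1" unfolding carm_primes_def using irreducible_degree_field by fastforce
      hence "x ^ degree P \<le> x ^ 1" using x0 x35 by (intro power_decreasing) auto
      thus "0 \<le> x ^ degree P \<and> x ^ degree P \<le> 3/5" using x0 x35 by simp
    qed
    have "real (carmichael_count TYPE('a) n) * x ^ n 
           \<le> (\<Prod>P\<in>carm_primes TYPE('a) n. 1 / (1 - x ^ degree P))"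
      by (rule count_le) (use n1 x0 x35 in auto)
    also have "\<dots> \<le> exp (\<Sum>P\<in>carm_primes TYPE('a) n. x ^ degree P + 5/2 * (x ^ degree P)^2)"
      by (rule prod_exp[OF PS finite_carm_primes])
    also have "(\<Sum>P\<in>carm_primes TYPE('a) n. x ^ degree P + 5/2 * (x ^ degree P)^2)
       \<le> (\<Sum>d\<in>Dn n. q ^ d / real d * (x ^ d + 5/2 * (x ^ d)^2))"
      unfolding q_def by (rule group_degree) (use n1 x0 in auto)
    also have "\<dots> = (\<Sum>d\<in>Dn n. real n powr (3*real d/(2*real n))/real d 
         + 5/2 * ((real n powr (3/(2*real n)))^2/q)^d / real d)"
    proof (rule sum.cong[OF refl])
      fix d
      have qd: "q ^ d > 0" using q2 by simp
      have "q ^ d / real d * (x ^ d + 5/2 * (x ^ d)^2) = (q^d * x^d) / real d + 5/2 * (q^d * (x^d)^2) / real d"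
        by (simp add: algebra_simps)
      also have "q^d * x^d = r^d" unfolding xpow using qd q2 by simp
      also have "q^d * (x^d)^2 = (r^2/q)^d"
      proof -
        have "(x^d)^2 = (x^2)^d" by (simp add: power_mult[symmetric] mult.commute)
        hence "q^d * (x^d)^2 = (q * x^2)^d" by (simp add: power_mult_distrib)
        moreover have "q * x^2 = r^2/q" unfolding x_def using q2 by (simp add: power2_eq_square field_simps)
        ultimately show ?thesis by simp
      qed
      finally have eq: "q ^ d / real d * (x ^ d + 5/2 * (x ^ d)^2) = r ^ d / real d + 5/2 * (r^2/q)^d / real d" .
      show "q ^ d / real d * (x ^ d + 5/2 * (x ^ d)^2) = real n powr (3*real d/(2*real n))/real d 
         + 5/2 * ((real n powr (3/(2*real n)))^2/q)^d / real d"
        using eq unfolding rpow[of d, symmetric] r_def[symmetric] .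
    qed
    also have "\<dots> \<le> (1+\<epsilon>) * ln (real n)"
    proof -
      have allq: "\<forall>q::real. q \<ge> 2 \<longrightarrow> (\<Sum>d\<in>Dn n. real n powr (3*real d/(2*real n))/real d 
         + 5/2 * ((real n powr (3/(2*real n)))^2/q)^d / real d) \<le> (1+\<epsilon>) * ln (real n)"
        using Nn by (elim conjE)
      show ?thesis using allq[rule_format, OF q2] .
    qed
    finally have main: "real (carmichael_count TYPE('a) n) * x ^ n \<le> exp ((1+\<epsilon>) * ln (real n))"
      by simp
    have "exp ((1+\<epsilon>) * ln (real n)) = real n powr (1+\<epsilon>)" using n0 by (simp add: powr_def)
    moreover have "x ^ n = real n powr (3/2) / q ^ n"
    proof -
      have "r ^ n = real n powr (3/2)" unfolding rpow using n0 by simp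
      thus ?thesis unfolding xpow by simp
    qed
    ultimately have "real (carmichael_count TYPE('a) n) * (real n powr (3/2) / q ^ n) \<le> real n powr (1+\<epsilon>)"
      using main by simp
    hence "real (carmichael_count TYPE('a) n) \<le> real n powr (1+\<epsilon>) * q ^ n / real n powr (3/2)"
      using n0 q2 by (simp add: field_simps)
    also have "real n powr (1+\<epsilon>) * q ^ n / real n powr (3/2) = q ^ n / real n powr (1/2 - \<epsilon>)"
    proof -
      have "real n powr (1+\<epsilon>) * real n powr (1/2 - \<epsilon>) = real n powr (3/2)"
        by (simp add: powr_add[symmetric])
      thus ?thesis using n0 by (simp add: field_simps)
    qed
    finally show "real (carmichael_count TYPE('a) n) \<le> real (card (UNIV :: 'a set)) ^ n / real n powr (1/2 - \<epsilon>)"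
      unfolding q_def by simp
  qed
qed

end
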